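(* Let $\mathcal D \subset \mathcal H$ be an (F)-domain and let $\mathcal A \subset \mathcal L^+(\mathcal D)$ be one of: (a) $\mathcal A = \mathcal F(\mathcal D)$; (b) a unital standard $*$-operator algebra; (c) a $*$-ideal of $\mathcal L^+(\mathcal D)$ with $\mathcal A \neq \mathcal F(\mathcal D)$. If $\Phi:\mathcal A\to\mathcal A$ is an additive bijection such that for all $A,B\in\mathcal A$, $A^+B = AB^+ = 0 \iff \Phi(A)^+\Phi(B) = \Phi(A)\Phi(B)^+ = 0$, then $\Phi$ maps rank-one operators to rank-one operators and $\Phi^{-1}$ maps rank-one operators to rank-one operators; in particular $\Phi$ restricts to an additive bijection of $\mathcal F(\mathcal D)$ onto itself preserving rank-one operators in both directions.
   Context: Let $\mathcal H$ be a complex Hilbert space, $\mathcal D$ a dense linear subspace. $\mathcal L^+(\mathcal D)$ denotes the set of linear operators $A$ defined on $\mathcal D$ with $A\mathcal D\subset\mathcal D$ and $A^*\mathcal D \subset \mathcal D$, a $*$-algebra with involution $A^+ = A^*|_{\mathcal D}$. $\mathcal D$ is an (F)-domain if it is a Fréchet space in the graph topology generated by the seminorms $\phi \mapsto \|A\phi\|$, $A \in \mathcal L^+(\mathcal D)$. $\mathcal F(\mathcal D)$ is the ideal of finite rank operators in $\mathcal L^+(\mathcal D)$. A standard ($*$-)operator algebra on $\mathcal D$ is a ($*$-)subalgebra of $\mathcal L^+(\mathcal D)$ containing $\mathcal F(\mathcal D)$; unital means it contains the identity. *)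

theory Defs
  imports Complex_Main
begin

class chilbert = ab_group_add +
  fixes scaleC :: "complex \<Rightarrow> 'a \<Rightarrow> 'a" (infixr \<open>*\<^sub>C\<close> 75)
    and cinner :: "'a \<Rightarrow> 'a \<Rightarrow> complex"
  assumes scaleC_add_right: "a *\<^sub>C (x + y) = a *\<^sub>C x + a *\<^sub>C y"
    and scaleC_add_left: "(a + b) *\<^sub>C x = a *\<^sub>C x + b *\<^sub>C x"
    and scaleC_scaleC: "a *\<^sub>C (b *\<^sub>C x) = (a * b) *\<^sub>C x"
    and scaleC_one: "1 *\<^sub>C x = x"
    and cinner_add_left: "cinner (x + y) z = cinner x z + cinner y z"
    and cinner_scaleC_left: "cinner (a *\<^sub>C x) y = a * cinner x y"
    and cinner_commute: "cinner y x = cnj (cinner x y)"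
    and cinner_nonneg: "0 \<le> Re (cinner x x)"
    and cinner_eq_zero: "cinner x x = 0 \<Longrightarrow> x = 0"
    and complete: "(\<forall>e::real>0. \<exists>N::nat. \<forall>m\<ge>N. \<forall>n\<ge>N. Re (cinner (X m - X n) (X m - X n)) < e)
        \<Longrightarrow> \<exists>L. \<forall>e::real>0. \<exists>N::nat. \<forall>n\<ge>N. Re (cinner (X n - L) (X n - L)) < e"

definition cnorm :: "'a::chilbert \<Rightarrow> real" where
  "cnorm x = sqrt (Re (cinner x x))"

text \<open>Operators on D are represented as functions H \<Rightarrow> H which vanish off D.\<close>

definition dense_subspace :: "'a::chilbert set \<Rightarrow> bool" where
  "dense_subspace D \<longleftrightarrow> 0 \<in> D \<and> (\<forall>x\<in>D. \<forall>y\<in>D. x + y \<in> D) \<and> (\<forall>c. \<forall>x\<in>D. c *\<^sub>C x \<in> D)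
     \<and> (\<forall>x. \<forall>e>0. \<exists>y\<in>D. cnorm (x - y) < e)"

definition is_op_on :: "'a::chilbert set \<Rightarrow> ('a \<Rightarrow> 'a) \<Rightarrow> bool" where
  "is_op_on D A \<longleftrightarrow> (\<forall>x. x \<notin> D \<longrightarrow> A x = 0) \<and> (\<forall>x\<in>D. A x \<in> D)
     \<and> (\<forall>x\<in>D. \<forall>y\<in>D. A (x + y) = A x + A y) \<and> (\<forall>c. \<forall>x\<in>D. A (c *\<^sub>C x) = c *\<^sub>C A x)"

text \<open>B is the restriction to D of the Hilbert space adjoint of A (requiring
that D is contained in dom A* and A* D \<subseteq> D).\<close>
definition is_adj_on :: "'a::chilbert set \<Rightarrow> ('a \<Rightarrow> 'a) \<Rightarrow> ('a \<Rightarrow> 'a) \<Rightarrow> bool" where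
  "is_adj_on D A B \<longleftrightarrow> (\<forall>x. x \<notin> D \<longrightarrow> B x = 0) \<and> (\<forall>x\<in>D. B x \<in> D)
     \<and> (\<forall>\<phi>\<in>D. \<forall>\<psi>\<in>D. cinner (A \<phi>) \<psi> = cinner \<phi> (B \<psi>))"

definition Lplus :: "'a::chilbert set \<Rightarrow> ('a \<Rightarrow> 'a) set" where
  "Lplus D = {A. is_op_on D A \<and> (\<exists>B. is_adj_on D A B)}"

definition ladj :: "'a::chilbert set \<Rightarrow> ('a \<Rightarrow> 'a) \<Rightarrow> ('a \<Rightarrow> 'a)" where
  "ladj D A = (THE B. is_adj_on D A B)"

definition zero_op :: "'a::chilbert \<Rightarrow> 'a" where
  "zero_op = (\<lambda>x. 0)"

definition id_op :: "'a::chilbert set \<Rightarrow> 'a \<Rightarrow> 'a" where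
  "id_op D = (\<lambda>x. if x \<in> D then x else 0)"

definition add_op :: "('a::chilbert \<Rightarrow> 'a) \<Rightarrow> ('a \<Rightarrow> 'a) \<Rightarrow> 'a \<Rightarrow> 'a" where
  "add_op A B = (\<lambda>x. A x + B x)"

definition smult_op :: "complex \<Rightarrow> ('a::chilbert \<Rightarrow> 'a) \<Rightarrow> 'a \<Rightarrow> 'a" where
  "smult_op c A = (\<lambda>x. c *\<^sub>C A x)"

text \<open>The graph topology on D is the locally convex topology given by the
seminorms \<phi> \<mapsto> \<parallel>A\<phi>\<parallel>, A \<in> L+(D). It is metrizable iff it is generated by a
countable subfamily (every seminorm of the family is dominated by a multiple of a
finite maximum of the countable ones), and, being metrizable, it is complete iff
every Cauchy sequence converges.\<close>

definition graph_metrizable :: "'a::chilbert set \<Rightarrow> bool" where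
  "graph_metrizable D \<longleftrightarrow> (\<exists>S :: nat \<Rightarrow> ('a \<Rightarrow> 'a). (\<forall>n. S n \<in> Lplus D) \<and>
     (\<forall>A\<in>Lplus D. \<exists>C k. \<forall>\<phi>\<in>D. cnorm (A \<phi>) \<le> C * Max ((\<lambda>i. cnorm (S i \<phi>)) ` {..k})))"

definition graph_complete :: "'a::chilbert set \<Rightarrow> bool" where
  "graph_complete D \<longleftrightarrow> (\<forall>X :: nat \<Rightarrow> 'a. (\<forall>n. X n \<in> D) \<longrightarrow>
     (\<forall>A\<in>Lplus D. \<forall>e>0. \<exists>N. \<forall>m\<ge>N. \<forall>n\<ge>N. cnorm (A (X m - X n)) < e) \<longrightarrow>
     (\<exists>\<phi>\<in>D. \<forall>A\<in>Lplus D. \<forall>e>0. \<exists>N. \<forall>n\<ge>N. cnorm (A (X n - \<phi>)) < e))"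

definition F_domain :: "'a::chilbert set \<Rightarrow> bool" where
  "F_domain D \<longleftrightarrow> dense_subspace D \<and> graph_metrizable D \<and> graph_complete D"

definition finite_rank :: "'a::chilbert set \<Rightarrow> ('a \<Rightarrow> 'a) \<Rightarrow> bool" where
  "finite_rank D A \<longleftrightarrow> (\<exists>S. finite S \<and> (\<forall>x\<in>D. \<exists>c. A x = (\<Sum>s\<in>S. c s *\<^sub>C s)))"

definition rank_one :: "'a::chilbert set \<Rightarrow> ('a \<Rightarrow> 'a) \<Rightarrow> bool" where
  "rank_one D A \<longleftrightarrow> (\<exists>x\<in>D. A x \<noteq> 0) \<and> (\<exists>u. \<forall>x\<in>D. \<exists>c. A x = c *\<^sub>C u)"

definition Fin :: "'a::chilbert set \<Rightarrow> ('a \<Rightarrow> 'a) set" where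
  "Fin D = {A \<in> Lplus D. finite_rank D A}"

definition subalgebra :: "'a::chilbert set \<Rightarrow> ('a \<Rightarrow> 'a) set \<Rightarrow> bool" where
  "subalgebra D \<A> \<longleftrightarrow> \<A> \<subseteq> Lplus D \<and> zero_op \<in> \<A>
     \<and> (\<forall>A\<in>\<A>. \<forall>B\<in>\<A>. add_op A B \<in> \<A> \<and> A \<circ> B \<in> \<A>) \<and> (\<forall>c. \<forall>A\<in>\<A>. smult_op c A \<in> \<A>)"

definition star_closed :: "'a::chilbert set \<Rightarrow> ('a \<Rightarrow> 'a) set \<Rightarrow> bool" where
  "star_closed D \<A> \<longleftrightarrow> (\<forall>A\<in>\<A>. ladj D A \<in> \<A>)"

definition unital_standard_star_algebra :: "'a::chilbert set \<Rightarrow> ('a \<Rightarrow> 'a) set \<Rightarrow> bool" where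
  "unital_standard_star_algebra D \<A> \<longleftrightarrow> subalgebra D \<A> \<and> star_closed D \<A>
     \<and> Fin D \<subseteq> \<A> \<and> id_op D \<in> \<A>"

definition star_ideal :: "'a::chilbert set \<Rightarrow> ('a \<Rightarrow> 'a) set \<Rightarrow> bool" where
  "star_ideal D \<A> \<longleftrightarrow> \<A> \<subseteq> Lplus D \<and> zero_op \<in> \<A>
     \<and> (\<forall>A\<in>\<A>. \<forall>B\<in>\<A>. add_op A B \<in> \<A>) \<and> (\<forall>c. \<forall>A\<in>\<A>. smult_op c A \<in> \<A>)
     \<and> (\<forall>X\<in>Lplus D. \<forall>A\<in>\<A>. X \<circ> A \<in> \<A> \<and> A \<circ> X \<in> \<A>) \<and> star_closed D \<A>"

end

theory Submission
  imports Defs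
begin


interpretation cv: module "scaleC :: complex \<Rightarrow> 'a::chilbert \<Rightarrow> 'a"
  by unfold_locales (auto simp: scaleC_add_right scaleC_add_left scaleC_scaleC scaleC_one)

lemma cinner_add_right: "cinner x (y + z) = cinner x y + cinner x z"
  by (subst (1 2 3) cinner_commute) (simp add: cinner_add_left)

lemma cinner_scaleC_right: "cinner x (a *\<^sub>C y) = cnj a * cinner x y"
  by (subst (1 2) cinner_commute) (simp add: cinner_scaleC_left)

lemma cinner_zero_left[simp]: "cinner 0 y = 0"
  using cinner_scaleC_left[of 0 0 y] by simp

lemma cinner_zero_right[simp]: "cinner y 0 = 0"
  by (subst cinner_commute) simp

lemma cinner_minus_left: "cinner (- x) y = - cinner x y"
  using cinner_scaleC_left[of "-1" x y] by (simp add: cv.scale_minus_left)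

lemma cinner_minus_right: "cinner y (- x) = - cinner y x"
  using cinner_scaleC_right[of y "-1" x] by (simp add: cv.scale_minus_left)

lemma cinner_diff_left: "cinner (x - z) y = cinner x y - cinner z y"
  using cinner_add_left[of x "-z" y] by (simp add: cinner_minus_left)

lemma cinner_diff_right: "cinner y (x - z) = cinner y x - cinner y z"
  using cinner_add_right[of y x "-z"] by (simp add: cinner_minus_right)

lemma cinner_sum_left: "finite I \<Longrightarrow> cinner (\<Sum>i\<in>I. f i) y = (\<Sum>i\<in>I. cinner (f i) y)"
  by (induction I rule: finite_induct) (auto simp: cinner_add_left)

lemma cinner_self_eq_0[simp]: "cinner x x = 0 \<longleftrightarrow> x = 0"
  using cinner_eq_zero by auto

lemma scaleC_eq_0_iff: "a *\<^sub>C x = 0 \<longleftrightarrow> a = 0 \<or> x = (0::'a::chilbert)"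
proof
  assume h: "a *\<^sub>C x = 0"
  show "a = 0 \<or> x = 0"
  proof (cases "a = 0")
    case False
    have "x = inverse a *\<^sub>C (a *\<^sub>C x)" using False by simp
    then show ?thesis using h by simp
  qed simp
qed auto

definition rk1 :: "'a::chilbert set \<Rightarrow> 'a \<Rightarrow> 'a \<Rightarrow> 'a \<Rightarrow> 'a" where
  "rk1 D a b = (\<lambda>x. if x \<in> D then cinner x b *\<^sub>C a else 0)"

definition orth :: "'a::chilbert set \<Rightarrow> ('a \<Rightarrow> 'a) \<Rightarrow> ('a \<Rightarrow> 'a) \<Rightarrow> bool" where
  "orth D A B \<longleftrightarrow> (\<forall>x\<in>D. \<forall>y\<in>D. cinner (A x) (B y) = 0)
     \<and> (\<forall>x\<in>D. \<forall>y\<in>D. cinner (ladj D A x) (ladj D B y) = 0)"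

locale dsp =
  fixes D :: "'a::chilbert set"
  assumes D0: "0 \<in> D" and Dadd: "x \<in> D \<Longrightarrow> y \<in> D \<Longrightarrow> x + y \<in> D"
    and Dscale: "x \<in> D \<Longrightarrow> c *\<^sub>C x \<in> D"
begin

lemma Dminus: "x \<in> D \<Longrightarrow> - x \<in> D"
  using Dscale[of x "-1"] by (simp add: cv.scale_minus_left)

lemma Ddiff: "x \<in> D \<Longrightarrow> y \<in> D \<Longrightarrow> x - y \<in> D"
  using Dadd[OF _ Dminus, of x y] by simp

lemma Dsum: "finite I \<Longrightarrow> (\<And>i. i \<in> I \<Longrightarrow> f i \<in> D) \<Longrightarrow> (\<Sum>i\<in>I. f i) \<in> D"
  by (induction I rule: finite_induct) (auto simp: D0 Dadd)

lemma ext0: "p \<in> D \<Longrightarrow> (\<And>x. x \<in> D \<Longrightarrow> cinner x p = 0) \<Longrightarrow> p = 0"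
  using cinner_self_eq_0 by blast

lemma op0: "is_op_on D A \<Longrightarrow> A 0 = 0"
  unfolding is_op_on_def using D0 by (metis add_cancel_right_right add_0)

lemma op_scale: "is_op_on D A \<Longrightarrow> x \<in> D \<Longrightarrow> A (c *\<^sub>C x) = c *\<^sub>C A x"
  unfolding is_op_on_def by auto

lemma op_add: "is_op_on D A \<Longrightarrow> x \<in> D \<Longrightarrow> y \<in> D \<Longrightarrow> A (x + y) = A x + A y"
  unfolding is_op_on_def by auto

lemma op_D: "is_op_on D A \<Longrightarrow> x \<in> D \<Longrightarrow> A x \<in> D"
  unfolding is_op_on_def by auto

lemma op_out: "is_op_on D A \<Longrightarrow> x \<notin> D \<Longrightarrow> A x = 0"
  unfolding is_op_on_def by auto

lemma op_minus: "is_op_on D A \<Longrightarrow> x \<in> D \<Longrightarrow> A (- x) = - A x"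
  using op_scale[of A x "-1"] by (simp add: cv.scale_minus_left)

lemma op_diff: "is_op_on D A \<Longrightarrow> x \<in> D \<Longrightarrow> y \<in> D \<Longrightarrow> A (x - y) = A x - A y"
  using op_add[of A x "-y"] by (simp add: Dminus op_minus)

lemma adj_unique: "is_adj_on D A B \<Longrightarrow> is_adj_on D A B' \<Longrightarrow> B = B'"
proof
  fix y assume 1: "is_adj_on D A B" and 2: "is_adj_on D A B'"
  show "B y = B' y"
  proof (cases "y \<in> D")
    case True
    have "B y - B' y \<in> D" using 1 2 True unfolding is_adj_on_def by (auto intro: Ddiff)
    moreover have "cinner x (B y - B' y) = 0" if "x \<in> D" for x
      using 1 2 True that unfolding is_adj_on_def by (simp add: cinner_diff_right)
    ultimately show ?thesis using ext0 by fastforce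
  next
    case False then show ?thesis using 1 2 unfolding is_adj_on_def by auto
  qed
qed

lemma ladj_eq: "is_adj_on D A B \<Longrightarrow> ladj D A = B"
  unfolding ladj_def using adj_unique by blast

lemma ladj_is: "A \<in> Lplus D \<Longrightarrow> is_adj_on D A (ladj D A)"
  unfolding Lplus_def using ladj_eq by auto

lemma Lop: "A \<in> Lplus D \<Longrightarrow> is_op_on D A"
  unfolding Lplus_def by auto

lemma adjD: "A \<in> Lplus D \<Longrightarrow> x \<in> D \<Longrightarrow> ladj D A x \<in> D"
  using ladj_is unfolding is_adj_on_def by blast

lemma adj_out: "A \<in> Lplus D \<Longrightarrow> x \<notin> D \<Longrightarrow> ladj D A x = 0"
  using ladj_is unfolding is_adj_on_def by blast

lemma adj_rel: "A \<in> Lplus D \<Longrightarrow> x \<in> D \<Longrightarrow> y \<in> D \<Longrightarrow> cinner (A x) y = cinner x (ladj D A y)"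
  using ladj_is unfolding is_adj_on_def by blast

lemma adj_rel': "A \<in> Lplus D \<Longrightarrow> x \<in> D \<Longrightarrow> y \<in> D \<Longrightarrow> cinner (ladj D A x) y = cinner x (A y)"
  by (metis adj_rel cinner_commute)

lemma adj0: "A \<in> Lplus D \<Longrightarrow> ladj D A 0 = 0"
proof -
  assume A: "A \<in> Lplus D"
  have "ladj D A 0 \<in> D" using adjD[OF A D0] .
  moreover have "cinner x (ladj D A 0) = 0" if "x \<in> D" for x
    using adj_rel[OF A that D0] by simp
  ultimately show ?thesis using ext0 by blast
qed

end


context dsp begin

lemma rk1_op: "a \<in> D \<Longrightarrow> is_op_on D (rk1 D a b)"
  unfolding is_op_on_def rk1_def
  by (auto simp: Dadd Dscale cinner_add_left cinner_scaleC_left cv.scale_left_distrib)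

lemma rk1_adj: "a \<in> D \<Longrightarrow> b \<in> D \<Longrightarrow> is_adj_on D (rk1 D a b) (rk1 D b a)"
  unfolding is_adj_on_def rk1_def
  by (auto simp: Dscale cinner_scaleC_left cinner_scaleC_right) (metis cinner_commute)+

lemma rk1_L: "a \<in> D \<Longrightarrow> b \<in> D \<Longrightarrow> rk1 D a b \<in> Lplus D"
  unfolding Lplus_def using rk1_op rk1_adj by blast

lemma rk1_ladj: "a \<in> D \<Longrightarrow> b \<in> D \<Longrightarrow> ladj D (rk1 D a b) = rk1 D b a"
  using rk1_adj ladj_eq by blast

lemma rk1_Fin: "a \<in> D \<Longrightarrow> b \<in> D \<Longrightarrow> rk1 D a b \<in> Fin D"
  unfolding Fin_def finite_rank_def using rk1_L
  by (auto simp: rk1_def intro!: exI[of _ "{a}"])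

lemma orth1: "A \<in> Lplus D \<Longrightarrow> B \<in> Lplus D \<Longrightarrow>
   (ladj D A \<circ> B = zero_op) \<longleftrightarrow> (\<forall>x\<in>D. \<forall>y\<in>D. cinner (A x) (B y) = 0)"
proof
  assume A: "A \<in> Lplus D" and B: "B \<in> Lplus D"
  { assume h: "ladj D A \<circ> B = zero_op"
    show "\<forall>x\<in>D. \<forall>y\<in>D. cinner (A x) (B y) = 0"
    proof (intro ballI)
      fix x y assume x: "x \<in> D" and y: "y \<in> D"
      have "ladj D A (B y) = 0" using fun_cong[OF h, of y] by (simp add: zero_op_def)
      then show "cinner (A x) (B y) = 0" using adj_rel[OF A x op_D[OF Lop[OF B] y]] by simp
    qed }
  { assume h: "\<forall>x\<in>D. \<forall>y\<in>D. cinner (A x) (B y) = 0"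
    show "ladj D A \<circ> B = zero_op"
    proof
      fix y show "(ladj D A \<circ> B) y = zero_op y"
      proof (cases "y \<in> D")
        case True
        define z where "z = ladj D A (B y)"
        have zD: "z \<in> D" unfolding z_def using adjD[OF A op_D[OF Lop[OF B] True]] .
        have "cinner z z = cinner (B y) (A z)"
          unfolding z_def using adj_rel'[OF A op_D[OF Lop[OF B] True]] zD z_def by simp
        also have "\<dots> = cnj (cinner (A z) (B y))" by (rule cinner_commute)
        also have "\<dots> = 0" using h zD True by simp
        finally show ?thesis by (simp add: z_def zero_op_def)
      next
        case False then show ?thesis using op_out[OF Lop[OF B] False] adj0[OF A]
          by (simp add: zero_op_def)
      qed
    qed }
qed

lemma orth2: "A \<in> Lplus D \<Longrightarrow> B \<in> Lplus D \<Longrightarrow>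
   (A \<circ> ladj D B = zero_op) \<longleftrightarrow> (\<forall>x\<in>D. \<forall>y\<in>D. cinner (ladj D A x) (ladj D B y) = 0)"
proof
  assume A: "A \<in> Lplus D" and B: "B \<in> Lplus D"
  { assume h: "A \<circ> ladj D B = zero_op"
    show "\<forall>x\<in>D. \<forall>y\<in>D. cinner (ladj D A x) (ladj D B y) = 0"
    proof (intro ballI)
      fix x y assume x: "x \<in> D" and y: "y \<in> D"
      have "A (ladj D B y) = 0" using fun_cong[OF h, of y] by (simp add: zero_op_def)
      then show "cinner (ladj D A x) (ladj D B y) = 0" using adj_rel'[OF A x adjD[OF B y]] by simp
    qed }
  { assume h: "\<forall>x\<in>D. \<forall>y\<in>D. cinner (ladj D A x) (ladj D B y) = 0"
    show "A \<circ> ladj D B = zero_op"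
    proof
      fix y show "(A \<circ> ladj D B) y = zero_op y"
      proof (cases "y \<in> D")
        case True
        define w where "w = ladj D B y"
        have wD: "w \<in> D" unfolding w_def using adjD[OF B True] .
        define z where "z = A w"
        have zD: "z \<in> D" unfolding z_def using op_D[OF Lop[OF A] wD] .
        have "cinner z z = cinner w (ladj D A z)"
          unfolding z_def using adj_rel[OF A wD] zD z_def by simp
        also have "\<dots> = cnj (cinner (ladj D A z) w)" by (rule cinner_commute)
        also have "\<dots> = 0" using h zD True w_def by simp
        finally show ?thesis by (simp add: z_def w_def zero_op_def)
      next
        case False then show ?thesis using adj_out[OF B False] op0[OF Lop[OF A]]
          by (simp add: zero_op_def)
      qed
    qed }
qed

lemma orth_iff: "A \<in> Lplus D \<Longrightarrow> B \<in> Lplus D \<Longrightarrow>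
   (ladj D A \<circ> B = zero_op \<and> A \<circ> ladj D B = zero_op) \<longleftrightarrow> orth D A B"
  unfolding orth_def using orth1 orth2 by blast

lemma orth_sym: "orth D A B \<Longrightarrow> orth D B A"
  unfolding orth_def by (metis cinner_commute complex_cnj_zero)

lemma zero_L: "zero_op \<in> Lplus D"
  unfolding Lplus_def is_op_on_def is_adj_on_def zero_op_def
  by (auto simp: D0 intro!: exI[of _ "\<lambda>x. 0"])

lemma add_L: "A \<in> Lplus D \<Longrightarrow> B \<in> Lplus D \<Longrightarrow> add_op A B \<in> Lplus D"
proof -
  assume A: "A \<in> Lplus D" and B: "B \<in> Lplus D"
  have "is_op_on D (add_op A B)" using Lop[OF A] Lop[OF B]
    unfolding is_op_on_def add_op_def by (auto simp: Dadd cv.scale_right_distrib)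
  moreover have "is_adj_on D (add_op A B) (add_op (ladj D A) (ladj D B))"
    unfolding is_adj_on_def add_op_def
    using A B by (auto simp: adj_out adjD Dadd cinner_add_left cinner_add_right adj_rel)
  ultimately show ?thesis unfolding Lplus_def by blast
qed

lemma smult_L: "A \<in> Lplus D \<Longrightarrow> smult_op c A \<in> Lplus D"
proof -
  assume A: "A \<in> Lplus D"
  have "is_op_on D (smult_op c A)" using Lop[OF A]
    unfolding is_op_on_def smult_op_def by (auto simp: Dscale cv.scale_right_distrib mult.commute)
  moreover have "is_adj_on D (smult_op c A) (smult_op (cnj c) (ladj D A))"
    unfolding is_adj_on_def smult_op_def
    using A by (auto simp: adj_out adjD Dscale cinner_scaleC_left cinner_scaleC_right adj_rel)
  ultimately show ?thesis unfolding Lplus_def by blast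
qed

lemma fr_zero: "finite_rank D zero_op"
  unfolding finite_rank_def zero_op_def by (auto intro!: exI[of _ "{}"])

lemma fr_add: "finite_rank D A \<Longrightarrow> finite_rank D B \<Longrightarrow> finite_rank D (add_op A B)"
proof -
  assume "finite_rank D A" "finite_rank D B"
  then obtain S T where S: "finite S" "\<forall>x\<in>D. \<exists>c. A x = (\<Sum>s\<in>S. c s *\<^sub>C s)"
    and T: "finite T" "\<forall>x\<in>D. \<exists>c. B x = (\<Sum>s\<in>T. c s *\<^sub>C s)"
    unfolding finite_rank_def by blast
  have "\<exists>c. add_op A B x = (\<Sum>s\<in>S \<union> T. c s *\<^sub>C s)" if x: "x \<in> D" for x
  proof -
    obtain c1 c2 where c1: "A x = (\<Sum>s\<in>S. c1 s *\<^sub>C s)" and c2: "B x = (\<Sum>s\<in>T. c2 s *\<^sub>C s)"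
      using S T x by blast
    define c where "c s = (if s \<in> S then c1 s else 0) + (if s \<in> T then c2 s else 0)" for s
    have "(\<Sum>s\<in>S \<union> T. c s *\<^sub>C s) = (\<Sum>s\<in>S \<union> T. (if s \<in> S then c1 s *\<^sub>C s else 0))
        + (\<Sum>s\<in>S \<union> T. (if s \<in> T then c2 s *\<^sub>C s else 0))"
    proof -
      have "c s *\<^sub>C s = (if s \<in> S then c1 s *\<^sub>C s else 0) + (if s \<in> T then c2 s *\<^sub>C s else 0)" for s
        unfolding c_def by (simp add: cv.scale_left_distrib)
      then show ?thesis by (simp add: sum.distrib)
    qed
    also have "\<dots> = (\<Sum>s\<in>S. c1 s *\<^sub>C s) + (\<Sum>s\<in>T. c2 s *\<^sub>C s)"
    proof -
      have e1: "(S \<union> T) \<inter> S = S" and e2: "(S \<union> T) \<inter> T = T" by blast+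
      show ?thesis
        using sum.inter_restrict[of "S \<union> T" "\<lambda>s. c1 s *\<^sub>C s" S]
          sum.inter_restrict[of "S \<union> T" "\<lambda>s. c2 s *\<^sub>C s" T] S(1) T(1) e1 e2 by simp
    qed
    finally have "add_op A B x = (\<Sum>s\<in>S \<union> T. c s *\<^sub>C s)" using c1 c2 by (simp add: add_op_def)
    then show ?thesis by blast
  qed
  moreover have "finite (S \<union> T)" using S T by simp
  ultimately show ?thesis unfolding finite_rank_def by blast
qed

lemma fr_smult: "finite_rank D A \<Longrightarrow> finite_rank D (smult_op a A)"
proof -
  assume "finite_rank D A"
  then obtain S where S: "finite S" "\<forall>x\<in>D. \<exists>c. A x = (\<Sum>s\<in>S. c s *\<^sub>C s)"
    unfolding finite_rank_def by blast
  have "\<exists>c. smult_op a A x = (\<Sum>s\<in>S. c s *\<^sub>C s)" if x: "x \<in> D" for x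
  proof -
    obtain c1 where c1: "A x = (\<Sum>s\<in>S. c1 s *\<^sub>C s)" using S x by blast
    show ?thesis using c1 by (auto simp: smult_op_def cv.scale_sum_right intro!: exI[of _ "\<lambda>s. a * c1 s"])
  qed
  then show ?thesis unfolding finite_rank_def using S(1) by blast
qed

lemma r1_fr: "rank_one D A \<Longrightarrow> finite_rank D A"
proof -
  assume "rank_one D A"
  then have "\<exists>u. \<forall>x\<in>D. \<exists>c. A x = c *\<^sub>C u" unfolding rank_one_def by (rule conjunct2)
  then obtain u where u: "\<forall>x\<in>D. \<exists>c. A x = c *\<^sub>C u" by (rule exE)
  have h: "\<exists>c. A x = (\<Sum>s\<in>{u}. c s *\<^sub>C s)" if "x \<in> D" for x
  proof -
    from bspec[OF u that] obtain c where "A x = c *\<^sub>C u" by (rule exE)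
    moreover have "(\<Sum>s\<in>{u}. (\<lambda>_. c) s *\<^sub>C s) = c *\<^sub>C u" by simp
    ultimately have "A x = (\<Sum>s\<in>{u}. (\<lambda>_. c) s *\<^sub>C s)" by (rule trans[OF _ sym])
    then show ?thesis by (rule exI[of _ "\<lambda>_. c"])
  qed
  have "finite {u}" by simp
  then show ?thesis unfolding finite_rank_def using h by blast
qed

end


context dsp begin

lemma nz_op: "A \<in> Lplus D \<Longrightarrow> A \<noteq> zero_op \<longleftrightarrow> (\<exists>x\<in>D. A x \<noteq> 0)"
proof
  assume A: "A \<in> Lplus D" and "A \<noteq> zero_op"
  then obtain x where x: "A x \<noteq> 0" unfolding zero_op_def by fastforce
  then have "x \<in> D" using op_out[OF Lop[OF A]] by metis
  from x this show "\<exists>x\<in>D. A x \<noteq> 0" by (rule bexI)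
next
  assume "\<exists>x\<in>D. A x \<noteq> 0" then show "A \<noteq> zero_op" unfolding zero_op_def by auto
qed

lemma cinner_uu_nz: "u \<noteq> 0 \<Longrightarrow> cinner u u \<noteq> 0"
  by simp

lemma proj_orth: "u \<noteq> 0 \<Longrightarrow> cinner (y - (cinner y u / cinner u u) *\<^sub>C u) u = 0"
  by (simp add: cinner_diff_left cinner_scaleC_left)

lemma proj_D: "u \<in> D \<Longrightarrow> y \<in> D \<Longrightarrow> y - (cinner y u / cinner u u) *\<^sub>C u \<in> D"
  by (simp add: Ddiff Dscale)

lemma proj_span:
  assumes u: "u \<in> D" "u \<noteq> 0" and y: "y \<in> D"
    and h: "\<And>w. w \<in> D \<Longrightarrow> cinner w u = 0 \<Longrightarrow> cinner y w = 0"
  shows "\<exists>c. y = c *\<^sub>C u"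
proof -
  define k where "k = cinner y u / cinner u u"
  define w where "w = y - k *\<^sub>C u"
  have wD: "w \<in> D" unfolding w_def k_def using proj_D[OF u(1) y] .
  have wu: "cinner w u = 0" unfolding w_def k_def using proj_orth[OF u(2)] .
  have uw: "cinner u w = 0" using wu cinner_commute[of u w] by simp
  have "cinner w w = cinner y w - k * cinner u w"
    unfolding w_def by (simp add: cinner_diff_left cinner_scaleC_left)
  also have "\<dots> = 0" using h[OF wD wu] uw by simp
  finally have "w = 0" by simp
  then have "y = k *\<^sub>C u" unfolding w_def by simp
  then show ?thesis by (rule exI)
qed

lemma dichot:
  assumes v: "v \<in> D" "v \<noteq> 0"
  shows "(\<exists>z\<in>D. z \<noteq> 0 \<and> cinner z v = 0) \<or> (\<forall>y\<in>D. \<exists>c. y = c *\<^sub>C v)"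
proof (cases "\<exists>z\<in>D. z \<noteq> 0 \<and> cinner z v = 0")
  case False
  have "\<exists>c. y = c *\<^sub>C v" if y: "y \<in> D" for y
  proof -
    define k where "k = cinner y v / cinner v v"
    have "y - k *\<^sub>C v \<in> D" unfolding k_def using proj_D[OF v(1) y] .
    moreover have "cinner (y - k *\<^sub>C v) v = 0" unfolding k_def using proj_orth[OF v(2)] .
    ultimately have "y - k *\<^sub>C v = 0" using False by blast
    then have "y = k *\<^sub>C v" by simp
    then show ?thesis by (rule exI)
  qed
  then show ?thesis by blast
qed blast

lemma span_change:
  assumes "u = c2 *\<^sub>C v" "u \<noteq> 0" "y = c1 *\<^sub>C v"
  shows "\<exists>c. y = c *\<^sub>C u"
proof -
  have c2: "c2 \<noteq> 0" using assms(1,2) by auto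
  have "y = (c1 / c2) *\<^sub>C u" using assms(1,3) c2 by simp
  then show ?thesis by (rule exI)
qed

lemma r1_formula:
  assumes A: "A \<in> Lplus D" and u: "u \<in> D" "u \<noteq> 0"
    and h: "\<And>x. x \<in> D \<Longrightarrow> \<exists>c. A x = c *\<^sub>C u" and x: "x \<in> D"
  shows "A x = (cinner x (ladj D A u) / cinner u u) *\<^sub>C u"
proof -
  from h[OF x] obtain c where c: "A x = c *\<^sub>C u" by (rule exE)
  have "cinner x (ladj D A u) = cinner (A x) u" using adj_rel[OF A x u(1)] by simp
  also have "\<dots> = c * cinner u u" unfolding c by (simp add: cinner_scaleC_left)
  finally have "c = cinner x (ladj D A u) / cinner u u" using u(2) by simp
  with c show ?thesis by simp
qed

lemma scal_adj:
  assumes A: "A \<in> Lplus D" and B: "B \<in> Lplus D"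
    and h: "\<And>x. x \<in> D \<Longrightarrow> B x = m *\<^sub>C A x" and y: "y \<in> D"
  shows "ladj D B y = cnj m *\<^sub>C ladj D A y"
proof -
  define p where "p = ladj D B y - cnj m *\<^sub>C ladj D A y"
  have pD: "p \<in> D" unfolding p_def by (simp add: Ddiff Dscale adjD A B y)
  have "cinner x p = 0" if x: "x \<in> D" for x
  proof -
    have "cinner x p = cinner x (ladj D B y) - m * cinner x (ladj D A y)"
      unfolding p_def by (simp add: cinner_diff_right cinner_scaleC_right)
    also have "\<dots> = cinner (B x) y - m * cinner (A x) y"
      using adj_rel[OF A x y] adj_rel[OF B x y] by simp
    also have "\<dots> = 0" using h[OF x] by (simp add: cinner_scaleC_left)
    finally show ?thesis .
  qed
  then have "p = 0" using ext0[OF pD] by blast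
  then show ?thesis unfolding p_def by simp
qed

lemma orth_scal:
  assumes A: "A \<in> Lplus D" and B: "B \<in> Lplus D"
    and h: "\<And>x. x \<in> D \<Longrightarrow> B x = m *\<^sub>C A x" and m: "m \<noteq> 0"
    and o: "orth D B C"
  shows "orth D A C"
  unfolding orth_def
proof (intro conjI ballI)
  fix x y assume x: "x \<in> D" and y: "y \<in> D"
  have "cinner (B x) (C y) = 0" using o x y unfolding orth_def by blast
  then show "cinner (A x) (C y) = 0" using h[OF x] m by (simp add: cinner_scaleC_left)
  have "cinner (ladj D B x) (ladj D C y) = 0" using o x y unfolding orth_def by blast
  then show "cinner (ladj D A x) (ladj D C y) = 0" using scal_adj[OF A B h x] m
    by (simp add: cinner_scaleC_left)
qed

end


context dsp begin

lemma rk1_app: "y \<in> D \<Longrightarrow> rk1 D a b y = cinner y b *\<^sub>C a"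
  unfolding rk1_def by simp

lemma rk1_ladj_app: "a \<in> D \<Longrightarrow> b \<in> D \<Longrightarrow> y \<in> D \<Longrightarrow> ladj D (rk1 D a b) y = cinner y a *\<^sub>C b"
  using rk1_ladj rk1_app by simp

lemma test_orth:
  assumes A: "A \<in> Lplus D" and u: "u \<in> D" and v: "v \<in> D"
    and hA: "\<And>x. x \<in> D \<Longrightarrow> \<exists>c. A x = c *\<^sub>C u"
    and hz: "\<And>z. z \<in> D \<Longrightarrow> cinner z v = 0 \<Longrightarrow> A z = 0"
    and w: "w \<in> D" "cinner w u = 0" and z: "z \<in> D" "cinner z v = 0"
  shows "orth D A (rk1 D w z)"
  unfolding orth_def
proof (intro conjI ballI)
  fix x y assume x: "x \<in> D" and y: "y \<in> D"
  from hA[OF x] obtain c where c: "A x = c *\<^sub>C u" by (rule exE)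
  have uw: "cinner u w = 0" using w(2) cinner_commute[of u w] by simp
  show "cinner (A x) (rk1 D w z y) = 0"
    unfolding c rk1_def using y uw by (simp add: cinner_scaleC_left cinner_scaleC_right)
  have "cinner (ladj D A x) z = cinner x (A z)" using adj_rel'[OF A x z(1)] .
  also have "\<dots> = 0" using hz[OF z] by simp
  finally have az: "cinner (ladj D A x) z = 0" .
  show "cinner (ladj D A x) (ladj D (rk1 D w z) y) = 0"
    unfolding rk1_ladj_app[OF w(1) z(1) y] using az by (simp add: cinner_scaleC_right)
qed

end

locale sett = dsp D for D :: "'a::chilbert set" +
  fixes Al :: "('a \<Rightarrow> 'a) set"
  assumes AL: "Al \<subseteq> Lplus D"
    and Ark: "\<exists>A\<in>Al. A \<noteq> zero_op \<Longrightarrow> a \<in> D \<Longrightarrow> b \<in> D \<Longrightarrow> rk1 D a b \<in> Al"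
begin

definition Bip where "Bip A B \<longleftrightarrow> (\<forall>C\<in>Al. orth D A C \<longrightarrow> orth D B C)"
definition Pr where "Pr A \<longleftrightarrow> A \<noteq> zero_op \<and> (\<forall>B\<in>Al. B \<noteq> zero_op \<longrightarrow> Bip A B \<longrightarrow> Bip B A)"

lemma r1_imp_P:
  assumes AA: "A \<in> Al" and r: "rank_one D A"
  shows "Pr A"
proof -
  have A: "A \<in> Lplus D" using AA AL by blast
  from r obtain x0 where x0: "x0 \<in> D" "A x0 \<noteq> 0" unfolding rank_one_def by blast
  from r have "\<exists>u. \<forall>x\<in>D. \<exists>c. A x = c *\<^sub>C u" unfolding rank_one_def by (rule conjunct2)
  then obtain u0 where u0: "\<forall>x\<in>D. \<exists>c. A x = c *\<^sub>C u0" by (rule exE)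
  define u where "u = A x0"
  have uD: "u \<in> D" unfolding u_def using op_D[OF Lop[OF A] x0(1)] .
  have unz: "u \<noteq> 0" unfolding u_def using x0(2) .
  have hu: "\<exists>c. A x = c *\<^sub>C u" if x: "x \<in> D" for x
  proof -
    from bspec[OF u0 x] obtain c1 where c1: "A x = c1 *\<^sub>C u0" by (rule exE)
    from bspec[OF u0 x0(1)] obtain c2 where c2: "A x0 = c2 *\<^sub>C u0" by (rule exE)
    show ?thesis using span_change[OF c2[folded u_def] unz c1] .
  qed
  define v where "v = ladj D A u"
  have vD: "v \<in> D" unfolding v_def using adjD[OF A uD] .
  have Aform: "A x = (cinner x v / cinner u u) *\<^sub>C u" if x: "x \<in> D" for x
    unfolding v_def using r1_formula[OF A uD unz hu x] .
  have vnz: "v \<noteq> 0"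
  proof
    assume "v = 0"
    then have "A x0 = 0" using Aform[OF x0(1)] by simp
    then show False using x0(2) by simp
  qed
  have Az: "A z = 0" if "z \<in> D" "cinner z v = 0" for z
    using Aform[OF that(1)] that(2) by simp
  have Anz: "A \<noteq> zero_op" using nz_op[OF A] x0 by blast
  have Ane: "\<exists>A\<in>Al. A \<noteq> zero_op" using AA Anz by blast
  show ?thesis
    unfolding Pr_def
  proof (intro conjI ballI impI)
    show "A \<noteq> zero_op" by (rule Anz)
    fix B assume BA: "B \<in> Al" and Bnz: "B \<noteq> zero_op" and bip: "Bip A B"
    have B: "B \<in> Lplus D" using BA AL by blast
    have orthB: "orth D B (rk1 D w z)"
      if "w \<in> D" "cinner w u = 0" "z \<in> D" "cinner z v = 0" for w z
    proof -
      have "orth D A (rk1 D w z)" using test_orth[OF A uD vD hu Az that] .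
      moreover have "rk1 D w z \<in> Al" using Ark[OF Ane that(1) that(3)] .
      ultimately show ?thesis using bip unfolding Bip_def by blast
    qed
    have hB: "\<exists>c. B x = c *\<^sub>C u" if x: "x \<in> D" for x
    proof -
      have BxD: "B x \<in> D" using op_D[OF Lop[OF B] x] .
      from dichot[OF vD vnz] show ?thesis
      proof
        assume "\<exists>z\<in>D. z \<noteq> 0 \<and> cinner z v = 0"
        then obtain z0 where z0: "z0 \<in> D" "z0 \<noteq> 0" "cinner z0 v = 0" by blast
        show ?thesis
        proof (rule proj_span[OF uD unz BxD])
          fix w assume w: "w \<in> D" "cinner w u = 0"
          have "orth D B (rk1 D w z0)" using orthB[OF w z0(1) z0(3)] .
          then have "cinner (B x) (rk1 D w z0 z0) = 0" using x z0(1) unfolding orth_def by blast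
          then have "cnj (cinner z0 z0) * cinner (B x) w = 0"
            using z0(1) by (simp add: rk1_def cinner_scaleC_right)
          then show "cinner (B x) w = 0" using z0(2) by simp
        qed
      next
        assume h: "\<forall>y\<in>D. \<exists>c. y = c *\<^sub>C v"
        from bspec[OF h BxD] obtain c1 where c1: "B x = c1 *\<^sub>C v" by (rule exE)
        from bspec[OF h uD] obtain c2 where c2: "u = c2 *\<^sub>C v" by (rule exE)
        show ?thesis using span_change[OF c2 unz c1] .
      qed
    qed
    have hB': "\<exists>c. ladj D B y = c *\<^sub>C v" if y: "y \<in> D" for y
    proof -
      have ByD: "ladj D B y \<in> D" using adjD[OF B y] .
      from dichot[OF uD unz] show ?thesis
      proof
        assume "\<exists>z\<in>D. z \<noteq> 0 \<and> cinner z u = 0"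
        then obtain w0 where w0: "w0 \<in> D" "w0 \<noteq> 0" "cinner w0 u = 0" by blast
        show ?thesis
        proof (rule proj_span[OF vD vnz ByD])
          fix z assume z: "z \<in> D" "cinner z v = 0"
          have "orth D B (rk1 D w0 z)" using orthB[OF w0(1) w0(3) z] .
          then have "cinner (ladj D B y) (ladj D (rk1 D w0 z) w0) = 0"
            using y w0(1) unfolding orth_def by blast
          then have "cnj (cinner w0 w0) * cinner (ladj D B y) z = 0"
            using w0(1) z(1) by (simp add: rk1_ladj_app cinner_scaleC_right)
          then show "cinner (ladj D B y) z = 0" using w0(2) by simp
        qed
      next
        assume h: "\<forall>y\<in>D. \<exists>c. y = c *\<^sub>C u"
        from bspec[OF h ByD] obtain c1 where c1: "ladj D B y = c1 *\<^sub>C u" by (rule exE)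
        from bspec[OF h vD] obtain c2 where c2: "v = c2 *\<^sub>C u" by (rule exE)
        show ?thesis using span_change[OF c2 vnz c1] .
      qed
    qed
    from hB'[OF uD] obtain g where g: "ladj D B u = g *\<^sub>C v" by (rule exE)
    have hm: "B x = cnj g *\<^sub>C A x" if x: "x \<in> D" for x
    proof -
      have "B x = (cinner x (ladj D B u) / cinner u u) *\<^sub>C u" using r1_formula[OF B uD unz hB x] .
      also have "\<dots> = (cnj g * (cinner x v / cinner u u)) *\<^sub>C u"
        unfolding g by (simp add: cinner_scaleC_right)
      also have "\<dots> = cnj g *\<^sub>C A x" unfolding Aform[OF x] by simp
      finally show ?thesis .
    qed
    have mnz: "cnj g \<noteq> 0"
    proof
      assume "cnj g = 0"
      then have "\<forall>x\<in>D. B x = 0" using hm by simp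
      then show False using nz_op[OF B] Bnz by blast
    qed
    show "Bip B A" unfolding Bip_def
      using orth_scal[OF A B hm mnz] by blast
  qed
qed

lemma P_imp_r1:
  assumes AA: "A \<in> Al" and P: "Pr A"
  shows "rank_one D A"
proof -
  have A: "A \<in> Lplus D" using AA AL by blast
  have Anz: "A \<noteq> zero_op" using P unfolding Pr_def by blast
  then obtain x0 where x0: "x0 \<in> D" "A x0 \<noteq> 0" using nz_op[OF A] by blast
  have Ane: "\<exists>A\<in>Al. A \<noteq> zero_op" using AA Anz by blast
  define u where "u = A x0"
  have uD: "u \<in> D" unfolding u_def using op_D[OF Lop[OF A] x0(1)] .
  have unz: "u \<noteq> 0" unfolding u_def using x0(2) .
  define v where "v = ladj D A u"
  have vD: "v \<in> D" unfolding v_def using adjD[OF A uD] .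
  have x0v: "cinner x0 v = cinner u u" unfolding v_def u_def using adj_rel[OF A x0(1) uD[unfolded u_def]] by simp
  have vnz: "v \<noteq> 0" using x0v unz by auto
  define B where "B = rk1 D u v"
  have BA: "B \<in> Al" unfolding B_def using Ark[OF Ane uD vD] .
  have B: "B \<in> Lplus D" unfolding B_def using rk1_L[OF uD vD] .
  have Bx: "B x = cinner x v *\<^sub>C u" if "x \<in> D" for x unfolding B_def rk1_def using that by simp
  have Bnz: "B \<noteq> zero_op"
  proof -
    have "B x0 \<noteq> 0" using Bx[OF x0(1)] x0v unz by (simp add: scaleC_eq_0_iff)
    then show ?thesis using nz_op[OF B] x0(1) by blast
  qed
  have bip: "Bip A B" unfolding Bip_def
  proof (intro ballI impI)
    fix C assume CA: "C \<in> Al" and o: "orth D A C"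
    show "orth D B C" unfolding orth_def
    proof (intro conjI ballI)
      fix x y assume x: "x \<in> D" and y: "y \<in> D"
      have "cinner (A x0) (C y) = 0" using o x0(1) y unfolding orth_def by blast
      then show "cinner (B x) (C y) = 0" unfolding Bx[OF x] u_def by (simp add: cinner_scaleC_left)
      have "cinner (ladj D A u) (ladj D C y) = 0" using o uD y unfolding orth_def by blast
      then show "cinner (ladj D B x) (ladj D C y) = 0"
      proof -
        have eq: "ladj D B x = cinner x u *\<^sub>C v" unfolding B_def by (rule rk1_ladj_app[OF uD vD x])
        show ?thesis unfolding eq v_def using \<open>cinner (ladj D A u) (ladj D C y) = 0\<close>
          by (simp add: cinner_scaleC_left)
      qed
    qed
  qed
  have bip2: "Bip B A" using P BA Bnz bip unfolding Pr_def by blast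
  have Bz: "B z = 0" if "z \<in> D" "cinner z v = 0" for z using Bx[OF that(1)] that(2) by simp
  have hBu: "\<exists>c. B x = c *\<^sub>C u" if "x \<in> D" for x using Bx[OF that] by (rule exI)
  have orthA: "orth D A (rk1 D w z)"
    if "w \<in> D" "cinner w u = 0" "z \<in> D" "cinner z v = 0" for w z
  proof -
    have "orth D B (rk1 D w z)" using test_orth[OF B uD vD hBu Bz that] .
    moreover have "rk1 D w z \<in> Al" using Ark[OF Ane that(1) that(3)] .
    ultimately show ?thesis using bip2 unfolding Bip_def by blast
  qed
  have hA: "\<exists>c. A x = c *\<^sub>C u" if x: "x \<in> D" for x
  proof -
    have AxD: "A x \<in> D" using op_D[OF Lop[OF A] x] .
    from dichot[OF vD vnz] show ?thesis
    proof
      assume "\<exists>z\<in>D. z \<noteq> 0 \<and> cinner z v = 0"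
      then obtain z0 where z0: "z0 \<in> D" "z0 \<noteq> 0" "cinner z0 v = 0" by blast
      show ?thesis
      proof (rule proj_span[OF uD unz AxD])
        fix w assume w: "w \<in> D" "cinner w u = 0"
        have "orth D A (rk1 D w z0)" using orthA[OF w z0(1) z0(3)] .
        then have "cinner (A x) (rk1 D w z0 z0) = 0" using x z0(1) unfolding orth_def by blast
        then have "cnj (cinner z0 z0) * cinner (A x) w = 0"
          using z0(1) by (simp add: rk1_def cinner_scaleC_right)
        then show "cinner (A x) w = 0" using z0(2) by simp
      qed
    next
      assume h: "\<forall>y\<in>D. \<exists>c. y = c *\<^sub>C v"
      from bspec[OF h AxD] obtain c1 where c1: "A x = c1 *\<^sub>C v" by (rule exE)
      from bspec[OF h uD] obtain c2 where c2: "u = c2 *\<^sub>C v" by (rule exE)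
      show ?thesis using span_change[OF c2 unz c1] .
    qed
  qed
  have "\<forall>x\<in>D. \<exists>c. A x = c *\<^sub>C u" using hA by blast
  then show ?thesis unfolding rank_one_def using x0 by blast
qed

lemma char: "A \<in> Al \<Longrightarrow> rank_one D A \<longleftrightarrow> Pr A"
  using r1_imp_P P_imp_r1 by blast

end


definition prj :: "'a::chilbert \<Rightarrow> 'a \<Rightarrow> 'a" where
  "prj u y = y - (cinner y u / cinner u u) *\<^sub>C u"

lemma prj_add: "prj u (x + y) = prj u x + prj u y"
  unfolding prj_def by (simp add: cinner_add_left add_divide_distrib cv.scale_left_distrib algebra_simps)

lemma prj_scale: "prj u (c *\<^sub>C y) = c *\<^sub>C prj u y"
  unfolding prj_def by (simp add: cinner_scaleC_left cv.scale_right_diff_distrib)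

lemma prj_zero: "prj u 0 = 0"
  unfolding prj_def by simp

lemma prj_sum: "finite I \<Longrightarrow> prj u (\<Sum>i\<in>I. c i *\<^sub>C g i) = (\<Sum>i\<in>I. c i *\<^sub>C prj u (g i))"
  by (induction I rule: finite_induct) (simp_all add: prj_zero prj_add prj_scale)

lemma prj_self: "u \<noteq> 0 \<Longrightarrow> prj u u = 0"
  unfolding prj_def by simp

lemma sum_nz: "(\<Sum>i\<in>I. c i *\<^sub>C g i) \<noteq> (0::'a::chilbert) \<Longrightarrow> \<exists>i\<in>I. c i \<noteq> 0"
proof (rule ccontr)
  assume a: "(\<Sum>i\<in>I. c i *\<^sub>C g i) \<noteq> 0" and "\<not> (\<exists>i\<in>I. c i \<noteq> 0)"
  then have "\<forall>i\<in>I. c i *\<^sub>C g i = 0" by simp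
  then have "(\<Sum>i\<in>I. c i *\<^sub>C g i) = 0" by (rule sum.neutral)
  with a show False by contradiction
qed

locale sett2 = sett D Al for D :: "'a::chilbert set" and Al +
  assumes A0: "zero_op \<in> Al"
    and Aadd: "A \<in> Al \<Longrightarrow> B \<in> Al \<Longrightarrow> add_op A B \<in> Al"
    and Asm: "A \<in> Al \<Longrightarrow> smult_op c A \<in> Al"
begin

lemma fin_map_aux:
  assumes Psi_add: "\<And>A B. A \<in> Al \<Longrightarrow> B \<in> Al \<Longrightarrow> Psi (add_op A B) = add_op (Psi A) (Psi B)"
    and Psi0: "Psi zero_op = zero_op"
    and Psi_r1: "\<And>A. A \<in> Al \<Longrightarrow> rank_one D A \<Longrightarrow> rank_one D (Psi A)"
  shows "F \<in> Al \<Longrightarrow> finite I \<Longrightarrow> card I = n \<Longrightarrow> (\<forall>x\<in>D. \<exists>c. F x = (\<Sum>i\<in>I. c i *\<^sub>C g i))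
     \<Longrightarrow> finite_rank D (Psi F)"
proof (induction n arbitrary: F g I rule: less_induct)
  case (less n)
  have FA: "F \<in> Al" and fI: "finite I" and cI: "card I = n"
    and rep: "\<forall>x\<in>D. \<exists>c. F x = (\<Sum>i\<in>I. c i *\<^sub>C g i)" using less.prems by auto
  have F: "F \<in> Lplus D" using FA AL by blast
  show ?case
  proof (cases "F = zero_op")
    case True then show ?thesis using Psi0 fr_zero by simp
  next
    case False
    then obtain x0 where x0: "x0 \<in> D" "F x0 \<noteq> 0" using nz_op[OF F] by blast
    have Ane: "\<exists>A\<in>Al. A \<noteq> zero_op" using FA False by blast
    define u where "u = F x0"
    have uD: "u \<in> D" unfolding u_def using op_D[OF Lop[OF F] x0(1)] .
    have unz: "u \<noteq> 0" unfolding u_def using x0(2) .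
    define v where "v = ladj D F u"
    have vD: "v \<in> D" unfolding v_def using adjD[OF F uD] .
    have Fv: "cinner x v = cinner (F x) u" if "x \<in> D" for x
      unfolding v_def using adj_rel[OF F that uD] by simp
    define G where "G = smult_op (1 / cinner u u) (rk1 D u v)"
    have GA: "G \<in> Al" unfolding G_def using Asm[OF Ark[OF Ane uD vD]] .
    have Gx: "G x = (cinner (F x) u / cinner u u) *\<^sub>C u" if "x \<in> D" for x
      unfolding G_def smult_op_def rk1_app[OF that] Fv[OF that] by simp
    have Gr1: "rank_one D G"
      unfolding rank_one_def
    proof (intro conjI)
      have "G x0 = u" using Gx[OF x0(1)] unz by (simp add: u_def)
      then show "\<exists>x\<in>D. G x \<noteq> 0" using x0(1) unz by blast
      have "\<forall>x\<in>D. \<exists>c. G x = c *\<^sub>C u" using Gx by blast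
      then show "\<exists>u. \<forall>x\<in>D. \<exists>c. G x = c *\<^sub>C u" by (rule exI)
    qed
    define F' where "F' = add_op F (smult_op (-1) G)"
    have F'A: "F' \<in> Al" unfolding F'_def using Aadd[OF FA Asm[OF GA]] .
    have Fdec: "F = add_op G F'"
    proof
      fix x show "F x = add_op G F' x"
        unfolding F'_def add_op_def smult_op_def by (simp add: cv.scale_minus_left)
    qed
    have F'x: "F' x = prj u (F x)" if "x \<in> D" for x
      unfolding F'_def add_op_def smult_op_def Gx[OF that] prj_def
      by (simp add: cv.scale_minus_left)
    from bspec[OF rep x0(1)] obtain c0 where c0: "F x0 = (\<Sum>i\<in>I. c0 i *\<^sub>C g i)" by (rule exE)
    have "\<exists>i\<in>I. c0 i \<noteq> 0" using sum_nz[of c0 g I] c0 x0(2) by simp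
    then obtain i0 where i0: "i0 \<in> I" "c0 i0 \<noteq> 0" by blast
    define I' where "I' = I - {i0}"
    have fI': "finite I'" unfolding I'_def using fI by simp
    have cI': "card I' < n" unfolding I'_def using cI fI i0(1)
      by (metis card_Diff1_less)
    define g' where "g' i = prj u (g i)" for i
    have "0 = prj u u" using prj_self[OF unz] by simp
    also have "\<dots> = (\<Sum>i\<in>I. c0 i *\<^sub>C g' i)" unfolding u_def c0 g'_def using prj_sum[OF fI] .
    also have "\<dots> = c0 i0 *\<^sub>C g' i0 + (\<Sum>i\<in>I'. c0 i *\<^sub>C g' i)"
      unfolding I'_def using sum.remove[OF fI i0(1)] .
    finally have e0: "c0 i0 *\<^sub>C g' i0 = - (\<Sum>i\<in>I'. c0 i *\<^sub>C g' i)"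
      by (simp add: eq_neg_iff_add_eq_0)
    have gi0: "g' i0 = (\<Sum>i\<in>I'. (- c0 i / c0 i0) *\<^sub>C g' i)"
    proof -
      have "g' i0 = (1 / c0 i0) *\<^sub>C (c0 i0 *\<^sub>C g' i0)" using i0(2) by simp
      also have "\<dots> = (\<Sum>i\<in>I'. (- c0 i / c0 i0) *\<^sub>C g' i)"
        unfolding e0 by (simp add: cv.scale_sum_right cv.scale_minus_right sum_negf)
      finally show ?thesis .
    qed
    have rep': "\<forall>x\<in>D. \<exists>c. F' x = (\<Sum>i\<in>I'. c i *\<^sub>C g' i)"
    proof
      fix x assume x: "x \<in> D"
      from bspec[OF rep x] obtain c where c: "F x = (\<Sum>i\<in>I. c i *\<^sub>C g i)" by (rule exE)
      have "F' x = (\<Sum>i\<in>I. c i *\<^sub>C g' i)" unfolding F'x[OF x] c g'_def using prj_sum[OF fI] .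
      also have "\<dots> = c i0 *\<^sub>C g' i0 + (\<Sum>i\<in>I'. c i *\<^sub>C g' i)"
        unfolding I'_def using sum.remove[OF fI i0(1)] .
      also have "\<dots> = (\<Sum>i\<in>I'. c i0 *\<^sub>C ((- c0 i / c0 i0) *\<^sub>C g' i) + c i *\<^sub>C g' i)"
        unfolding gi0 by (simp only: cv.scale_sum_right sum.distrib)
      also have "\<dots> = (\<Sum>i\<in>I'. (c i0 * (- c0 i / c0 i0) + c i) *\<^sub>C g' i)"
        by (rule sum.cong[OF refl]) (simp add: cv.scale_left_distrib cv.scale_left_diff_distrib)
      finally show "\<exists>c. F' x = (\<Sum>i\<in>I'. c i *\<^sub>C g' i)"
        by (rule exI[of _ "\<lambda>i. c i0 * (- c0 i / c0 i0) + c i"])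
    qed
    have fr': "finite_rank D (Psi F')" using less.IH[OF cI' F'A fI' refl rep'] .
    have frG: "finite_rank D (Psi G)" using r1_fr[OF Psi_r1[OF GA Gr1]] .
    have "Psi F = add_op (Psi G) (Psi F')" unfolding Fdec using Psi_add[OF GA F'A] .
    then show ?thesis using fr_add[OF frG fr'] by simp
  qed
qed

lemma fin_map:
  assumes Psi_add: "\<And>A B. A \<in> Al \<Longrightarrow> B \<in> Al \<Longrightarrow> Psi (add_op A B) = add_op (Psi A) (Psi B)"
    and Psi0: "Psi zero_op = zero_op"
    and Psi_r1: "\<And>A. A \<in> Al \<Longrightarrow> rank_one D A \<Longrightarrow> rank_one D (Psi A)"
    and FA: "F \<in> Al" and fr: "finite_rank D F"
  shows "finite_rank D (Psi F)"
proof -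
  from fr obtain S where S: "finite S" "\<forall>x\<in>D. \<exists>c. F x = (\<Sum>s\<in>S. c s *\<^sub>C s)"
    unfolding finite_rank_def by blast
  have "\<forall>x\<in>D. \<exists>c. F x = (\<Sum>s\<in>S. c s *\<^sub>C id s)" using S(2) by simp
  then show ?thesis using fin_map_aux[OF Psi_add Psi0 Psi_r1 FA S(1) refl] by blast
qed

end


lemma ball_img: "(\<forall>x\<in>f ` A. P x) = (\<forall>x\<in>A. P (f x))"
  by blast

context sett begin

lemma Pr_inv:
  assumes bij: "bij_betw Phi Al Al"
    and po: "\<forall>A\<in>Al. \<forall>B\<in>Al. orth D A B \<longleftrightarrow> orth D (Phi A) (Phi B)"
    and z: "zero_op \<in> Al" and Phi0: "Phi zero_op = zero_op" and AA: "A \<in> Al"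
  shows "Pr (Phi A) \<longleftrightarrow> Pr A"
proof -
  have img: "Phi ` Al = Al" using bij by (simp add: bij_betw_def)
  have inj: "inj_on Phi Al" using bij by (simp add: bij_betw_def)
  have nz: "Phi X = zero_op \<longleftrightarrow> X = zero_op" if "X \<in> Al" for X
    using inj_on_eq_iff[OF inj that z] Phi0 by simp
  have bipinv: "Bip (Phi X) (Phi Y) \<longleftrightarrow> Bip X Y" if X: "X \<in> Al" and Y: "Y \<in> Al" for X Y
  proof -
    have "Bip (Phi X) (Phi Y) \<longleftrightarrow> (\<forall>C\<in>Phi ` Al. orth D (Phi X) C \<longrightarrow> orth D (Phi Y) C)"
      unfolding Bip_def img ..
    also have "\<dots> \<longleftrightarrow> (\<forall>C\<in>Al. orth D (Phi X) (Phi C) \<longrightarrow> orth D (Phi Y) (Phi C))"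
      by (rule ball_img)
    also have "\<dots> \<longleftrightarrow> (\<forall>C\<in>Al. orth D X C \<longrightarrow> orth D Y C)"
      using po X Y by auto
    finally show ?thesis unfolding Bip_def .
  qed
  have "Pr (Phi A) \<longleftrightarrow> Phi A \<noteq> zero_op \<and> (\<forall>B\<in>Phi ` Al. B \<noteq> zero_op \<longrightarrow> Bip (Phi A) B \<longrightarrow> Bip B (Phi A))"
    unfolding Pr_def img ..
  also have "\<dots> \<longleftrightarrow> Phi A \<noteq> zero_op \<and> (\<forall>B\<in>Al. Phi B \<noteq> zero_op \<longrightarrow> Bip (Phi A) (Phi B) \<longrightarrow> Bip (Phi B) (Phi A))"
    by (simp only: ball_img)
  also have "\<dots> \<longleftrightarrow> A \<noteq> zero_op \<and> (\<forall>B\<in>Al. B \<noteq> zero_op \<longrightarrow> Bip A B \<longrightarrow> Bip B A)"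
    using nz bipinv AA by auto
  finally show ?thesis unfolding Pr_def .
qed

end

context dsp begin

lemma ideal_rk:
  assumes I: "star_ideal D Al" and AA: "A \<in> Al" and Anz: "A \<noteq> zero_op" and a: "a \<in> D" and b: "b \<in> D"
  shows "rk1 D a b \<in> Al"
proof -
  have AL: "Al \<subseteq> Lplus D" and Icomp: "\<forall>X\<in>Lplus D. \<forall>A\<in>Al. X \<circ> A \<in> Al \<and> A \<circ> X \<in> Al"
    and Ism: "\<forall>c. \<forall>A\<in>Al. smult_op c A \<in> Al" using I unfolding star_ideal_def by auto
  have A: "A \<in> Lplus D" using AA AL by blast
  obtain x0 where x0: "x0 \<in> D" "A x0 \<noteq> 0" using nz_op[OF A] Anz by blast
  define u where "u = A x0"
  have uD: "u \<in> D" unfolding u_def using op_D[OF Lop[OF A] x0(1)] .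
  have unz: "u \<noteq> 0" unfolding u_def using x0(2) .
  have X1: "rk1 D x0 b \<in> Lplus D" using rk1_L[OF x0(1) b] .
  have X2: "rk1 D a u \<in> Lplus D" using rk1_L[OF a uD] .
  have "A \<circ> rk1 D x0 b \<in> Al" using Icomp X1 AA by blast
  then have "rk1 D a u \<circ> (A \<circ> rk1 D x0 b) \<in> Al" using Icomp X2 by blast
  then have inA: "smult_op (1 / cinner u u) (rk1 D a u \<circ> (A \<circ> rk1 D x0 b)) \<in> Al" using Ism by blast
  have "rk1 D a b = smult_op (1 / cinner u u) (rk1 D a u \<circ> (A \<circ> rk1 D x0 b))"
  proof
    fix z show "rk1 D a b z = smult_op (1 / cinner u u) (rk1 D a u \<circ> (A \<circ> rk1 D x0 b)) z"
    proof (cases "z \<in> D")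
      case True
      have e1: "A (rk1 D x0 b z) = cinner z b *\<^sub>C u"
        unfolding rk1_app[OF True] u_def using op_scale[OF Lop[OF A] x0(1)] .
      have inD: "cinner z b *\<^sub>C u \<in> D" using Dscale[OF uD] .
      have "smult_op (1 / cinner u u) (rk1 D a u \<circ> (A \<circ> rk1 D x0 b)) z
          = (1 / cinner u u) *\<^sub>C rk1 D a u (A (rk1 D x0 b z))" by (simp add: smult_op_def)
      also have "\<dots> = (1 / cinner u u) *\<^sub>C rk1 D a u (cinner z b *\<^sub>C u)" by (simp only: e1)
      also have "\<dots> = (1 / cinner u u) *\<^sub>C (cinner (cinner z b *\<^sub>C u) u *\<^sub>C a)" by (simp only: rk1_app[OF inD])
      also have "\<dots> = cinner z b *\<^sub>C a" using unz by (simp add: cinner_scaleC_left)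
      also have "\<dots> = rk1 D a b z" by (simp only: rk1_app[OF True])
      finally show ?thesis by (rule sym)
    next
      case False
      have "rk1 D x0 b z = 0" unfolding rk1_def using False by simp
      then show ?thesis unfolding smult_op_def comp_def
        using False op0[OF Lop[OF A]] rk1_app[OF D0, of a u] by (simp add: rk1_def)
    qed
  qed
  with inA show ?thesis by simp
qed

end

theorem mainTheorem4:
  fixes D :: "'a::chilbert set"
    and \<A> :: "('a \<Rightarrow> 'a) set"
    and \<Phi> :: "('a \<Rightarrow> 'a) \<Rightarrow> ('a \<Rightarrow> 'a)"
  assumes FD: "F_domain D"
    and cases: "\<A> = Fin D \<or> unital_standard_star_algebra D \<A>
                 \<or> (star_ideal D \<A> \<and> \<A> \<noteq> Fin D)"
    and additive: "\<forall>A\<in>\<A>. \<forall>B\<in>\<A>. \<Phi> (add_op A B) = add_op (\<Phi> A) (\<Phi> B)"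
    and bij: "bij_betw \<Phi> \<A> \<A>"
    and pres: "\<forall>A\<in>\<A>. \<forall>B\<in>\<A>.
        (ladj D A \<circ> B = zero_op \<and> A \<circ> ladj D B = zero_op) \<longleftrightarrow>
        (ladj D (\<Phi> A) \<circ> \<Phi> B = zero_op \<and> \<Phi> A \<circ> ladj D (\<Phi> B) = zero_op)"
  shows "(\<forall>A\<in>\<A>. rank_one D A \<longrightarrow> rank_one D (\<Phi> A))
       \<and> (\<forall>A\<in>\<A>. rank_one D A \<longrightarrow> rank_one D (inv_into \<A> \<Phi> A))
       \<and> bij_betw \<Phi> (Fin D \<inter> \<A>) (Fin D \<inter> \<A>)"
proof -
  have dsub: "dense_subspace D" using FD unfolding F_domain_def by (rule conjunct1)
  have d: "0 \<in> D \<and> (\<forall>x\<in>D. \<forall>y\<in>D. x + y \<in> D) \<and> (\<forall>c. \<forall>x\<in>D. c *\<^sub>C x \<in> D)"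
    using dsub unfolding dense_subspace_def by (elim conjE) (intro conjI; assumption)
  have ds: "dsp D"
  proof (rule dsp.intro)
    show "0 \<in> D" using d by (rule conjunct1)
    show "x + y \<in> D" if "x \<in> D" "y \<in> D" for x y
      using d that by simp
    show "c *\<^sub>C x \<in> D" if "x \<in> D" for x c
      using d that by simp
  qed
  interpret dsp D by (rule ds)
  have props: "\<A> \<subseteq> Lplus D \<and> zero_op \<in> \<A> \<and> (\<forall>A\<in>\<A>. \<forall>B\<in>\<A>. add_op A B \<in> \<A>)
     \<and> (\<forall>c. \<forall>A\<in>\<A>. smult_op c A \<in> \<A>)
     \<and> (\<forall>a b. (\<exists>A\<in>\<A>. A \<noteq> zero_op) \<longrightarrow> a \<in> D \<longrightarrow> b \<in> D \<longrightarrow> rk1 D a b \<in> \<A>)"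
    using cases
  proof (elim disjE conjE)
    assume e: "\<A> = Fin D"
    have p1: "Fin D \<subseteq> Lplus D" unfolding Fin_def by (rule subsetI) (erule CollectE, erule conjE)
    have p2: "zero_op \<in> Fin D" unfolding Fin_def using zero_L fr_zero by simp
    have p3: "\<forall>A\<in>Fin D. \<forall>B\<in>Fin D. add_op A B \<in> Fin D"
      unfolding Fin_def using add_L fr_add by simp
    have p4: "\<forall>c. \<forall>A\<in>Fin D. smult_op c A \<in> Fin D"
      unfolding Fin_def using smult_L fr_smult by simp
    have p5: "\<forall>a b. (\<exists>A\<in>Fin D. A \<noteq> zero_op) \<longrightarrow> a \<in> D \<longrightarrow> b \<in> D \<longrightarrow> rk1 D a b \<in> Fin D"
      using rk1_Fin by simp
    show ?thesis unfolding e using p1 p2 p3 p4 p5 by (intro conjI)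
  next
    assume u: "unital_standard_star_algebra D \<A>"
    then have s: "subalgebra D \<A>" and f: "Fin D \<subseteq> \<A>"
      unfolding unital_standard_star_algebra_def by auto
    have p5: "\<forall>a b. (\<exists>A\<in>\<A>. A \<noteq> zero_op) \<longrightarrow> a \<in> D \<longrightarrow> b \<in> D \<longrightarrow> rk1 D a b \<in> \<A>"
      using rk1_Fin f by auto
    have p: "\<A> \<subseteq> Lplus D \<and> zero_op \<in> \<A> \<and> (\<forall>A\<in>\<A>. \<forall>B\<in>\<A>. add_op A B \<in> \<A> \<and> A \<circ> B \<in> \<A>)
      \<and> (\<forall>c. \<forall>A\<in>\<A>. smult_op c A \<in> \<A>)" using s unfolding subalgebra_def .
    then have p3: "\<forall>A\<in>\<A>. \<forall>B\<in>\<A>. add_op A B \<in> \<A>" by simp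
    show ?thesis using p p3 p5 by (elim conjE) (intro conjI)
  next
    assume i: "star_ideal D \<A>" and "\<A> \<noteq> Fin D"
    have p5: "\<forall>a b. (\<exists>A\<in>\<A>. A \<noteq> zero_op) \<longrightarrow> a \<in> D \<longrightarrow> b \<in> D \<longrightarrow> rk1 D a b \<in> \<A>"
    proof (intro allI impI)
      fix a b assume "\<exists>A\<in>\<A>. A \<noteq> zero_op" "a \<in> D" "b \<in> D"
      then obtain A where "A \<in> \<A>" "A \<noteq> zero_op" by blast
      then show "rk1 D a b \<in> \<A>" using ideal_rk[OF i] \<open>a \<in> D\<close> \<open>b \<in> D\<close> by blast
    qed
    have p: "\<A> \<subseteq> Lplus D \<and> zero_op \<in> \<A>
     \<and> (\<forall>A\<in>\<A>. \<forall>B\<in>\<A>. add_op A B \<in> \<A>) \<and> (\<forall>c. \<forall>A\<in>\<A>. smult_op c A \<in> \<A>)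
     \<and> (\<forall>X\<in>Lplus D. \<forall>A\<in>\<A>. X \<circ> A \<in> \<A> \<and> A \<circ> X \<in> \<A>) \<and> star_closed D \<A>"
      using i unfolding star_ideal_def .
    show ?thesis using p p5 by (elim conjE) (intro conjI)
  qed
  have q1: "\<A> \<subseteq> Lplus D" and q2: "zero_op \<in> \<A>" and q3: "\<forall>A\<in>\<A>. \<forall>B\<in>\<A>. add_op A B \<in> \<A>"
    and q4: "\<forall>c. \<forall>A\<in>\<A>. smult_op c A \<in> \<A>"
    and q5: "\<forall>a b. (\<exists>A\<in>\<A>. A \<noteq> zero_op) \<longrightarrow> a \<in> D \<longrightarrow> b \<in> D \<longrightarrow> rk1 D a b \<in> \<A>"
    using props by simp_all
  have S2: "sett2 D \<A>"
  proof (intro sett2.intro sett.intro sett_axioms.intro sett2_axioms.intro ds)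
    show "\<A> \<subseteq> Lplus D" by (rule q1)
    show "zero_op \<in> \<A>" by (rule q2)
    show "rk1 D a b \<in> \<A>" if "\<exists>A\<in>\<A>. A \<noteq> zero_op" "a \<in> D" "b \<in> D" for a b
      using q5 that by simp
    show "add_op A B \<in> \<A>" if "A \<in> \<A>" "B \<in> \<A>" for A B using q3 that by simp
    show "smult_op c A \<in> \<A>" if "A \<in> \<A>" for A c using q4 that by simp
  qed
  interpret S: sett2 D \<A> by (rule S2)
  have AL: "\<A> \<subseteq> Lplus D" by (rule q1)
  have img: "\<Phi> ` \<A> = \<A>" using bij by (simp add: bij_betw_def)
  have inj: "inj_on \<Phi> \<A>" using bij by (simp add: bij_betw_def)
  have PhiA: "\<Phi> A \<in> \<A>" if "A \<in> \<A>" for A using that img by blast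
  have po: "\<forall>A\<in>\<A>. \<forall>B\<in>\<A>. orth D A B \<longleftrightarrow> orth D (\<Phi> A) (\<Phi> B)"
  proof (intro ballI)
    fix A B assume A: "A \<in> \<A>" and B: "B \<in> \<A>"
    have L: "A \<in> Lplus D" "B \<in> Lplus D" "\<Phi> A \<in> Lplus D" "\<Phi> B \<in> Lplus D"
      using A B PhiA AL by blast+
    show "orth D A B \<longleftrightarrow> orth D (\<Phi> A) (\<Phi> B)"
      using pres A B orth_iff[OF L(1) L(2)] orth_iff[OF L(3) L(4)] by blast
  qed
  have z: "zero_op \<in> \<A>" by (rule q2)
  have zz: "add_op zero_op zero_op = (zero_op :: 'a \<Rightarrow> 'a)" by (simp add: add_op_def zero_op_def)
  have Phi0: "\<Phi> zero_op = zero_op"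
  proof
    fix x
    have "\<Phi> zero_op = add_op (\<Phi> zero_op) (\<Phi> zero_op)" using additive z zz by metis
    then have "\<Phi> zero_op x = \<Phi> zero_op x + \<Phi> zero_op x" unfolding add_op_def by metis
    then show "\<Phi> zero_op x = zero_op x" unfolding zero_op_def by simp
  qed
  define Psi where "Psi = inv_into \<A> \<Phi>"
  have PsiA: "Psi A \<in> \<A>" if "A \<in> \<A>" for A
    unfolding Psi_def using inv_into_into[of A \<Phi> \<A>] that img by simp
  have PhiPsi: "\<Phi> (Psi A) = A" if "A \<in> \<A>" for A
    unfolding Psi_def using f_inv_into_f[of A \<Phi> \<A>] that img by simp
  have PsiPhi: "Psi (\<Phi> A) = A" if "A \<in> \<A>" for A
    unfolding Psi_def using inv_into_f_f[OF inj that] .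
  have Psi0: "Psi zero_op = zero_op" using PsiPhi[OF z] Phi0 by simp
  have Phiadd: "\<Phi> (add_op A B) = add_op (\<Phi> A) (\<Phi> B)" if "A \<in> \<A>" "B \<in> \<A>" for A B
    using additive that by blast
  have Psiadd: "Psi (add_op A B) = add_op (Psi A) (Psi B)" if A: "A \<in> \<A>" and B: "B \<in> \<A>" for A B
  proof -
    have "add_op A B = \<Phi> (add_op (Psi A) (Psi B))"
      using Phiadd[OF PsiA[OF A] PsiA[OF B]] PhiPsi[OF A] PhiPsi[OF B] by simp
    then have "Psi (add_op A B) = Psi (\<Phi> (add_op (Psi A) (Psi B)))" by simp
    also have "\<dots> = add_op (Psi A) (Psi B)" using PsiPhi S.Aadd[OF PsiA[OF A] PsiA[OF B]] by blast
    finally show ?thesis .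
  qed
  have PrPhi: "S.Pr (\<Phi> A) \<longleftrightarrow> S.Pr A" if "A \<in> \<A>" for A
    using S.Pr_inv[OF bij po z Phi0 that] .
  have part1: "rank_one D (\<Phi> A)" if A: "A \<in> \<A>" and r: "rank_one D A" for A
    using S.char[OF A] S.char[OF PhiA[OF A]] PrPhi[OF A] r by blast
  have part2: "rank_one D (Psi A)" if A: "A \<in> \<A>" and r: "rank_one D A" for A
  proof -
    have "S.Pr (\<Phi> (Psi A))" using S.char[OF A] r PhiPsi[OF A] by simp
    then have "S.Pr (Psi A)" using PrPhi[OF PsiA[OF A]] by blast
    then show ?thesis using S.char[OF PsiA[OF A]] by blast
  qed
  have fwd: "\<Phi> F \<in> Fin D \<inter> \<A>" if F: "F \<in> Fin D \<inter> \<A>" for F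
  proof -
    have FA: "F \<in> \<A>" and fr: "finite_rank D F" using F unfolding Fin_def by auto
    have "finite_rank D (\<Phi> F)" using S.fin_map[OF Phiadd Phi0 part1 FA fr] by blast
    moreover have "\<Phi> F \<in> Lplus D" using PhiA[OF FA] AL by blast
    ultimately show ?thesis using PhiA[OF FA] unfolding Fin_def by blast
  qed
  have bwd: "Psi F \<in> Fin D \<inter> \<A>" if F: "F \<in> Fin D \<inter> \<A>" for F
  proof -
    have FA: "F \<in> \<A>" and fr: "finite_rank D F" using F unfolding Fin_def by auto
    have "finite_rank D (Psi F)" using S.fin_map[OF Psiadd Psi0 part2 FA fr] by blast
    moreover have "Psi F \<in> Lplus D" using PsiA[OF FA] AL by blast
    ultimately show ?thesis using PsiA[OF FA] unfolding Fin_def by blast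
  qed
  have part3: "bij_betw \<Phi> (Fin D \<inter> \<A>) (Fin D \<inter> \<A>)"
    unfolding bij_betw_def
  proof
    show "inj_on \<Phi> (Fin D \<inter> \<A>)" using inj by (rule inj_on_subset) blast
    show "\<Phi> ` (Fin D \<inter> \<A>) = Fin D \<inter> \<A>"
    proof
      show "\<Phi> ` (Fin D \<inter> \<A>) \<subseteq> Fin D \<inter> \<A>" using fwd by blast
      show "Fin D \<inter> \<A> \<subseteq> \<Phi> ` (Fin D \<inter> \<A>)"
      proof
        fix F assume F: "F \<in> Fin D \<inter> \<A>"
        have e: "F = \<Phi> (Psi F)" using PhiPsi F by simp
        from e bwd[OF F] show "F \<in> \<Phi> ` (Fin D \<inter> \<A>)" by (rule image_eqI)
      qed
    qed
  qed
  show ?thesis using part1 part2 part3 unfolding Psi_def by blast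
qed


end
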